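(* Let $G_n$, $g_n$ and $A_n$ be as defined in the context. Then for all $n\ge2$, $$A_n=G_n+G_{n-1}=g_{n+1}-g_{n-1}.$$
   Context: $H\times K$ denotes the Cartesian product of graphs. $P_n$ is the path with vertex set $\{1,\dots,n\}$ and $C_4$ is the $4$-cycle. A domino tiling of a finite graph is a perfect matching. $G_n$ is the number of domino tilings of $C_4\times P_n$. $g_n$ is the number of domino tilings of the graph obtained from $C_4\times P_n$ by deleting two adjacent vertices of the copy $C_4\times\{1\}$. $A_n=\frac16\big[(3+\sqrt3)(2+\sqrt3)^n+(3-\sqrt3)(2-\sqrt3)^n\big]$, so that $A_1=3$, $A_2=11$, $A_3=41,\dots$ *)

theory Defs
  imports Complex_Main
begin

text \<open>Finite simple graphs are given by a vertex set V and an edge set E of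
  2-element subsets of V.\<close>

definition perfect_matching :: "'a set \<Rightarrow> 'a set set \<Rightarrow> 'a set set \<Rightarrow> bool" where
  "perfect_matching V E M \<longleftrightarrow> M \<subseteq> E \<and> (\<forall>v\<in>V. \<exists>!e. e \<in> M \<and> v \<in> e)"

definition num_tilings :: "'a set \<Rightarrow> 'a set set \<Rightarrow> nat" where
  "num_tilings V E = card {M. perfect_matching V E M}"

definition cart_verts :: "'a set \<Rightarrow> 'b set \<Rightarrow> ('a \<times> 'b) set" where
  "cart_verts V1 V2 = V1 \<times> V2"

definition cart_edges :: "'a set \<Rightarrow> 'a set set \<Rightarrow> 'b set \<Rightarrow> 'b set set \<Rightarrow> ('a \<times> 'b) set set" where
  "cart_edges V1 E1 V2 E2 =
     {{(a, b), (a', b)} | a a' b. {a, a'} \<in> E1 \<and> b \<in> V2} \<union>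
     {{(a, b), (a, b')} | a b b'. a \<in> V1 \<and> {b, b'} \<in> E2}"

definition C4_verts :: "nat set" where "C4_verts = {0, 1, 2, 3}"
definition C4_edges :: "nat set set" where
  "C4_edges = {{i, (i + 1) mod 4} | i. i < 4}"

definition P_verts :: "nat \<Rightarrow> nat set" where "P_verts n = {1..n}"
definition P_edges :: "nat \<Rightarrow> nat set set" where
  "P_edges n = {{i, i + 1} | i. 1 \<le> i \<and> i < n}"

definition CP_verts :: "nat \<Rightarrow> (nat \<times> nat) set" where
  "CP_verts n = cart_verts C4_verts (P_verts n)"
definition CP_edges :: "nat \<Rightarrow> (nat \<times> nat) set set" where
  "CP_edges n = cart_edges C4_verts C4_edges (P_verts n) (P_edges n)"

definition G :: "nat \<Rightarrow> nat" where
  "G n = num_tilings (CP_verts n) (CP_edges n)"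

definition g :: "nat \<Rightarrow> nat" where
  "g n = (let V = CP_verts n - {(0, 1), (1, 1)}
          in num_tilings V {e \<in> CP_edges n. e \<subseteq> V})"

definition A :: "nat \<Rightarrow> real" where
  "A n = ((3 + sqrt 3) * (2 + sqrt 3) ^ n + (3 - sqrt 3) * (2 - sqrt 3) ^ n) / 6"

end

theory Submission
  imports Defs
begin


abbreviation PM where "PM V E \<equiv> {M. perfect_matching V {e\<in>E. e \<subseteq> V} M}"

lemma PM_finite: "finite V \<Longrightarrow> finite (PM V E)"
  by (rule finite_subset[where B="Pow (Pow V)"]) (auto simp: perfect_matching_def)

lemma peel_N:
  assumes fin: "finite V" and v: "v \<in> V" and c2: "\<forall>e\<in>E. card e = 2"
  shows "card (PM V E) = (\<Sum>u\<in>{u. u \<in> V \<and> {v,u} \<in> E}. card (PM (V - {v,u}) E))"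
proof -
  define N where "N = {u. u \<in> V \<and> {v,u} \<in> E}"
  have Nfin: "finite N" using fin unfolding N_def by auto
  have vu: "u \<noteq> v" if "u \<in> N" for u
  proof
    assume "u = v" then have "{v,u} = {v}" by auto
    with that c2 show False unfolding N_def by force
  qed
  have eq: "PM V E = (\<Union>u\<in>N. insert {v,u} ` PM (V - {v,u}) E)"
  proof (rule set_eqI, rule iffI)
    fix M assume "M \<in> PM V E"
    hence pm: "M \<subseteq> {e\<in>E. e \<subseteq> V}" "\<forall>x\<in>V. \<exists>!e. e \<in> M \<and> x \<in> e"
      by (auto simp: perfect_matching_def)
    obtain e where e: "e \<in> M" "v \<in> e" and eu: "\<And>e'. e' \<in> M \<Longrightarrow> v \<in> e' \<Longrightarrow> e' = e"
      using pm(2) v by blast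
    have "e \<in> E" "e \<subseteq> V" using pm(1) e by auto
    then have "card e = 2" using c2 by auto
    then obtain x y where xy: "e = {x,y}" "x \<noteq> y" by (meson card_2_iff)
    then obtain u where u: "e = {v,u}" using e by auto
    have uN: "u \<in> N" unfolding N_def using \<open>e \<in> E\<close> \<open>e \<subseteq> V\<close> u by auto
    have uV: "u \<in> V" using uN N_def by auto
    have euu: "e' = e" if "e' \<in> M" "u \<in> e'" for e'
      using pm(2) uV that e u by blast
    define M' where "M' = M - {e}"
    have "M' \<in> PM (V - {v,u}) E"
      unfolding mem_Collect_eq perfect_matching_def
    proof (intro conjI ballI)
      show "M' \<subseteq> {ea \<in> E. ea \<subseteq> V - {v, u}}"
      proof
        fix e' assume "e' \<in> M'"
        hence "e' \<in> M" "e' \<noteq> e" by (auto simp: M'_def)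
        hence "v \<notin> e'" "u \<notin> e'" using eu euu by auto
        thus "e' \<in> {ea \<in> E. ea \<subseteq> V - {v, u}}" using pm(1) \<open>e' \<in> M\<close> by auto
      qed
    next
      fix x assume "x \<in> V - {v,u}"
      then obtain e' where "e' \<in> M" "x \<in> e'" "\<And>e''. e'' \<in> M \<Longrightarrow> x \<in> e'' \<Longrightarrow> e'' = e'"
        using pm(2) by blast
      moreover have "x \<notin> e" using u \<open>x \<in> V - {v,u}\<close> by auto
      ultimately show "\<exists>!e. e \<in> M' \<and> x \<in> e" unfolding M'_def by blast
    qed
    moreover have "M = insert {v,u} M'" using e u unfolding M'_def by auto
    ultimately show "M \<in> (\<Union>u\<in>N. insert {v,u} ` PM (V - {v,u}) E)" using uN by blast
  next
    fix M assume "M \<in> (\<Union>u\<in>N. insert {v,u} ` PM (V - {v,u}) E)"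
    then obtain u M' where uN: "u \<in> N" and M: "M = insert {v,u} M'"
      and pm': "M' \<in> PM (V - {v,u}) E" by auto
    have uV: "u \<in> V" "{v,u} \<in> E" using uN N_def by auto
    from pm' have pm: "M' \<subseteq> {e\<in>E. e \<subseteq> V - {v,u}}" "\<forall>x\<in>V-{v,u}. \<exists>!e. e \<in> M' \<and> x \<in> e"
      by (auto simp: perfect_matching_def)
    show "M \<in> PM V E" unfolding mem_Collect_eq perfect_matching_def
    proof (intro conjI ballI)
      show "M \<subseteq> {e \<in> E. e \<subseteq> V}" using M pm(1) uV v by auto
    next
      fix x assume xV: "x \<in> V"
      show "\<exists>!e. e \<in> M \<and> x \<in> e"
      proof (cases "x \<in> {v,u}")
        case True
        then have "\<forall>e\<in>M'. x \<notin> e" using pm(1) by auto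
        then show ?thesis using True M by blast
      next
        case False
        then have "x \<in> V - {v,u}" using xV by auto
        then show ?thesis using pm(2) False M by blast
      qed
    qed
  qed
  have "card (PM V E) = (\<Sum>u\<in>N. card (insert {v,u} ` PM (V - {v,u}) E))"
    unfolding eq
  proof (rule card_UN_disjoint)
    show "finite N" by fact
    show "\<forall>i\<in>N. finite (insert {v, i} ` PM (V - {v, i}) E)"
      using fin PM_finite[of "V - {v,_}" E] by blast
    show "\<forall>i\<in>N. \<forall>j\<in>N. i \<noteq> j \<longrightarrow> insert {v, i} ` PM (V - {v, i}) E \<inter> insert {v, j} ` PM (V - {v, j}) E = {}"
    proof (intro ballI impI)
      fix i j assume "i \<in> N" "j \<in> N" "i \<noteq> j"
      show "insert {v, i} ` PM (V - {v, i}) E \<inter> insert {v, j} ` PM (V - {v, j}) E = {}"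
      proof (rule ccontr)
        assume "\<not> ?thesis"
        then obtain A B where A: "A \<in> PM (V - {v, i}) E" and B: "B \<in> PM (V - {v, j}) E"
          and AB: "insert {v,i} A = insert {v,j} B" by blast
        have "{v,i} \<in> insert {v,j} B" using AB by blast
        moreover have "{v,i} \<notin> B" using B by (auto simp: perfect_matching_def)
        ultimately have "{v,i} = {v,j}" by blast
        thus False using \<open>i \<noteq> j\<close> by (auto simp: doubleton_eq_iff)
      qed
    qed
  qed
  also have "\<dots> = (\<Sum>u\<in>N. card (PM (V - {v,u}) E))"
  proof (rule sum.cong[OF refl])
    fix u assume "u \<in> N"
    have "inj_on (insert {v,u}) (PM (V - {v,u}) E)"
    proof (rule inj_onI)
      fix A B assume A: "A \<in> PM (V - {v, u}) E" and B: "B \<in> PM (V - {v, u}) E"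
        and AB: "insert {v,u} A = insert {v,u} B"
      have "{v,u} \<notin> A" "{v,u} \<notin> B" using A B by (auto simp: perfect_matching_def)
      thus "A = B" using AB by (metis insert_ident)
    qed
    thus "card (insert {v,u} ` PM (V - {v,u}) E) = card (PM (V - {v,u}) E)"
      by (rule card_image)
  qed
  finally show ?thesis unfolding N_def .
qed

lemma peel:
  assumes fin: "finite V" and v: "v \<in> V" and c2: "\<forall>e\<in>E. card e = 2"
    and C: "finite C" "\<And>u. u \<in> V \<Longrightarrow> {v,u} \<in> E \<Longrightarrow> u \<in> C"
  shows "card (PM V E) = (\<Sum>u\<in>C. if u \<in> V \<and> {v,u} \<in> E then card (PM (V - {v,u}) E) else 0)"
proof -
  have "card (PM V E) = (\<Sum>u\<in>{u. u \<in> V \<and> {v,u} \<in> E}. card (PM (V - {v,u}) E))"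
    by (rule peel_N[OF fin v c2])
  also have "\<dots> = (\<Sum>u\<in>C \<inter> {u. u \<in> V \<and> {v,u} \<in> E}. card (PM (V - {v,u}) E))"
    using C(2) by (metis (no_types, lifting) Int_absorb1 mem_Collect_eq subsetI)
  also have "\<dots> = (\<Sum>u\<in>C. if u \<in> V \<and> {v,u} \<in> E then card (PM (V - {v,u}) E) else 0)"
    using C(1) by (simp add: sum.inter_restrict)
  finally show ?thesis .
qed

lemma PM_empty: "\<forall>e\<in>E. card e = 2 \<Longrightarrow> card (PM {} E) = 1"
proof -
  assume "\<forall>e\<in>E. card e = 2"
  hence "PM {} E = {{}}" by (force simp: perfect_matching_def)
  thus ?thesis by simp
qed



definition Eall :: "(nat\<times>nat) set set" where
 "Eall = {{(a,j),((a+1) mod 4, j)} | a j. a<4 \<and> 1\<le>j} \<union> {{(a,j),(a,Suc j)} | a j. a<4 \<and> 1\<le>j}"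

definition cnt :: "(nat\<times>nat) set \<Rightarrow> nat" where "cnt V = card (PM V Eall)"

lemma Eall_iff: "e \<in> Eall \<longleftrightarrow> (\<exists>a j. e = {(a,j),((a+1) mod 4, j)} \<and> a<4 \<and> 1\<le>j) \<or> (\<exists>a j. e = {(a,j),(a,Suc j)} \<and> a<4 \<and> 1\<le>j)"
  unfolding Eall_def by simp

lemma Eall_card: "\<forall>e\<in>Eall. card e = 2"
proof
  fix e assume "e \<in> Eall"
  then show "card e = 2" unfolding Eall_iff
  proof (elim disjE exE conjE)
    fix a j assume h: "e = {(a,j),((a+1) mod 4, j)}" "a < 4"
    have "a \<noteq> (a+1) mod 4" using h(2) by presburger
    then show ?thesis using h(1) by auto
  next
    fix a j assume "e = {(a,j),(a,Suc j)}" then show ?thesis by auto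
  qed
qed

lemma Eall_nbr:
  assumes "{(a,k),(b,i)} \<in> Eall" "a < 4"
  shows "(b,i) \<in> {((a+1) mod 4,k), ((a+3) mod 4,k), (a,Suc k), (a, k - 1)}"
  using assms(1) unfolding Eall_iff
proof (elim disjE exE conjE)
  fix c j assume h: "{(a,k),(b,i)} = {(c,j),((c+1) mod 4, j)}" "c < 4"
  from h(1) consider "a = c" "k = j" "b = (c+1) mod 4" "i = j" | "a = (c+1) mod 4" "k = j" "b = c" "i = j"
    by (auto simp: doubleton_eq_iff)
  then show ?thesis
  proof cases
    case 1 then show ?thesis by simp
  next
    case 2
    have "c = (a+3) mod 4" using 2(1) h(2) by presburger
    then show ?thesis using 2 by simp
  qed
next
  fix c j assume "{(a,k),(b,i)} = {(c,j),(c,Suc j)}"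
  then show ?thesis by (auto simp: doubleton_eq_iff)
qed

lemma Eall_h1: "a < 4 \<Longrightarrow> 1 \<le> k \<Longrightarrow> {(a,k),((a+1) mod 4,k)} \<in> Eall"
  unfolding Eall_iff by (intro disjI1 exI conjI) simp_all

lemma Eall_h3: "a < 4 \<Longrightarrow> 1 \<le> k \<Longrightarrow> {(a,k),((a+3) mod 4,k)} \<in> Eall"
proof -
  assume a: "a < 4" "1 \<le> k"
  have "(((a+3) mod 4) + 1) mod 4 = a" using a by presburger
  hence "{(a,k),((a+3) mod 4,k)} = {((a+3) mod 4,k), (((a+3) mod 4 + 1) mod 4, k)}" by auto
  moreover have "(a+3) mod 4 < 4" by simp
  ultimately show ?thesis unfolding Eall_iff using a by (intro disjI1 exI[of _ "(a+3) mod 4"] exI[of _ k]) simp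
qed

lemma Eall_v: "a < 4 \<Longrightarrow> 1 \<le> k \<Longrightarrow> {(a,k),(a,Suc k)} \<in> Eall"
  unfolding Eall_iff by (intro disjI2 exI conjI) simp_all

definition Y :: "nat \<Rightarrow> nat \<Rightarrow> (nat\<Rightarrow>bool) \<Rightarrow> (nat\<Rightarrow>bool) \<Rightarrow> (nat\<times>nat) set" where
 "Y k n p q = {(a,j). a<4 \<and> ((j = k \<and> p a) \<or> (j = Suc k \<and> j \<le> n \<and> q a) \<or> (Suc (Suc k) \<le> j \<and> j \<le> n))}"

lemma Y_finite: "finite (Y k n p q)"
  by (rule finite_subset[where B="{..<4} \<times> {..k+n}"]) (auto simp: Y_def)

lemma step:
  assumes k: "1 \<le> k" and a: "a < 4" and pa: "p a"
  shows "cnt (Y k n p q) =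
    (if p ((a+1) mod 4) then cnt (Y k n (p(a:=False, (a+1) mod 4:=False)) q) else 0) +
    (if p ((a+3) mod 4) then cnt (Y k n (p(a:=False, (a+3) mod 4:=False)) q) else 0) +
    (if Suc k \<le> n \<and> q a then cnt (Y k n (p(a:=False)) (q(a:=False))) else 0)"
proof -
  let ?V = "Y k n p q"
  let ?C = "{((a+1) mod 4,k), ((a+3) mod 4,k), (a,Suc k)}"
  define F where "F u = (if u \<in> ?V \<and> {(a,k),u} \<in> Eall then cnt (?V - {(a,k),u}) else 0)" for u
  have "cnt ?V = (\<Sum>u\<in>?C. F u)"
    unfolding cnt_def F_def
  proof (rule peel[OF Y_finite _ Eall_card])
    show "(a,k) \<in> ?V" using a pa by (simp add: Y_def)
    show "finite ?C" by simp
    fix u assume "u \<in> ?V" "{(a,k),u} \<in> Eall"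
    then obtain b i where u: "u = (b,i)" "(b,i) \<in> ?V" "{(a,k),(b,i)} \<in> Eall" by (cases u) auto
    have "(b,i) \<noteq> (a, k-1)" using u(2) k by (auto simp: Y_def)
    then show "u \<in> ?C" using Eall_nbr[OF u(3) a] u(1) by auto
  qed
  also have "\<dots> = F ((a+1) mod 4,k) + F ((a+3) mod 4,k) + F (a,Suc k)"
  proof -
    have "(a+1) mod 4 \<noteq> (a+3) mod 4" by presburger
    thus ?thesis by (simp add: add.assoc)
  qed
  also have "F ((a+1) mod 4,k) = (if p ((a+1) mod 4) then cnt (Y k n (p(a:=False, (a+1) mod 4:=False)) q) else 0)"
  proof -
    have "?V - {(a,k),((a+1) mod 4,k)} = Y k n (p(a:=False, (a+1) mod 4:=False)) q"
      unfolding Y_def by (auto split: if_splits)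
    moreover have "((a+1) mod 4,k) \<in> ?V \<longleftrightarrow> p ((a+1) mod 4)" by (simp add: Y_def)
    ultimately show ?thesis unfolding F_def using Eall_h1[OF a k] by simp
  qed
  also have "F ((a+3) mod 4,k) = (if p ((a+3) mod 4) then cnt (Y k n (p(a:=False, (a+3) mod 4:=False)) q) else 0)"
  proof -
    have "?V - {(a,k),((a+3) mod 4,k)} = Y k n (p(a:=False, (a+3) mod 4:=False)) q"
      unfolding Y_def by (auto split: if_splits)
    moreover have "((a+3) mod 4,k) \<in> ?V \<longleftrightarrow> p ((a+3) mod 4)" by (simp add: Y_def)
    ultimately show ?thesis unfolding F_def using Eall_h3[OF a k] by simp
  qed
  also have "F (a,Suc k) = (if Suc k \<le> n \<and> q a then cnt (Y k n (p(a:=False)) (q(a:=False))) else 0)"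
  proof -
    have "?V - {(a,k),(a,Suc k)} = Y k n (p(a:=False)) (q(a:=False))"
      unfolding Y_def by (auto split: if_splits)
    moreover have "(a,Suc k) \<in> ?V \<longleftrightarrow> Suc k \<le> n \<and> q a" using a by (auto simp: Y_def)
    ultimately show ?thesis unfolding F_def using Eall_v[OF a k] by simp
  qed
  finally show ?thesis .
qed

lemma Y_empty_top: "(\<And>a. a<4 \<Longrightarrow> \<not> p a) \<Longrightarrow> Y n n p q = {}"
  unfolding Y_def by force

lemma Y_empty_shift: "(\<And>a. a<4 \<Longrightarrow> \<not> p a) \<Longrightarrow> k < n \<Longrightarrow> Y k n p q = Y (Suc k) n q (\<lambda>_. True)"
  unfolding Y_def by (rule set_eqI) (clarsimp, fastforce)

lemma cnt_empty: "cnt {} = 1"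
  unfolding cnt_def by (rule PM_empty[OF Eall_card])



type_synonym b4 = "bool \<times> bool \<times> bool \<times> bool"

definition sel :: "b4 \<Rightarrow> nat \<Rightarrow> bool" where
  "sel p a = (case p of (p0,p1,p2,p3) \<Rightarrow> if a=0 then p0 else if a=1 then p1 else if a=2 then p2 else if a=3 then p3 else False)"

lemma sel_simp[simp]: "sel (p0,p1,p2,p3) a = (if a=0 then p0 else if a=1 then p1 else if a=2 then p2 else if a=3 then p3 else False)"
  by (simp add: sel_def)

lemma sel_upd[simp]:
  "(sel (p0,p1,p2,p3))(0:=x) = sel (x,p1,p2,p3)"
  "(sel (p0,p1,p2,p3))(1:=x) = sel (p0,x,p2,p3)"
  "(sel (p0,p1,p2,p3))(Suc 0:=x) = sel (p0,x,p2,p3)"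
  "(sel (p0,p1,p2,p3))(Suc (Suc 0):=x) = sel (p0,p1,x,p3)"
  "(sel (p0,p1,p2,p3))(Suc (Suc (Suc 0)):=x) = sel (p0,p1,p2,x)"
  "(sel (p0,p1,p2,p3))(2:=x) = sel (p0,p1,x,p3)"
  "(sel (p0,p1,p2,p3))(3:=x) = sel (p0,p1,p2,x)"
  by (rule ext; simp)+

fun nb :: "b4 \<Rightarrow> nat" where
  "nb (p0,p1,p2,p3) = of_bool p0 + of_bool p1 + of_bool p2 + of_bool p3"

function f :: "nat \<Rightarrow> b4 \<Rightarrow> b4 \<Rightarrow> nat" where
"f m (p0,p1,p2,p3) (q0,q1,q2,q3) =
 (if p0 then (if p1 then f m (False,False,p2,p3) (q0,q1,q2,q3) else 0)
           + (if p3 then f m (False,p1,p2,False) (q0,q1,q2,q3) else 0)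
           + (if 0 < m \<and> q0 then f m (False,p1,p2,p3) (False,q1,q2,q3) else 0)
  else if p1 then (if p2 then f m (False,False,False,p3) (q0,q1,q2,q3) else 0)
           + (if 0 < m \<and> q1 then f m (False,False,p2,p3) (q0,False,q2,q3) else 0)
  else if p2 then (if p3 then f m (False,False,False,False) (q0,q1,q2,q3) else 0)
           + (if 0 < m \<and> q2 then f m (False,False,False,p3) (q0,q1,False,q3) else 0)
  else if p3 then (if 0 < m \<and> q3 then f m (False,False,False,False) (q0,q1,q2,False) else 0)
  else (case m of 0 \<Rightarrow> 1 | Suc m' \<Rightarrow> f m' (q0,q1,q2,q3) (True,True,True,True)))"
  by pat_completeness auto
termination
  by (relation "measure (\<lambda>(m,p,q). 5*m + nb p)") auto

declare f.simps[simp del]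

lemma main: "\<forall>k n. 1 \<le> k \<longrightarrow> k \<le> n \<longrightarrow> n - k = m \<longrightarrow> cnt (Y k n (sel p) (sel q)) = f m p q"
proof (induction m p q rule: f.induct)
  case (1 m p0 p1 p2 p3 q0 q1 q2 q3)
  note feq = f.simps[of m p0 p1 p2 p3 q0 q1 q2 q3]
  show ?case
  proof (intro allI impI)
    fix k n assume k: "1 \<le> k" "k \<le> n" "n - k = m"
    have mk: "(0 < m) = (Suc k \<le> n)" using k by auto
    show "cnt (Y k n (sel (p0,p1,p2,p3)) (sel (q0,q1,q2,q3))) = f m (p0,p1,p2,p3) (q0,q1,q2,q3)"
    proof (cases p0)
      case True
      have t0: "(if p1 then cnt (Y k n (sel (False,False,p2,p3)) (sel (q0,q1,q2,q3))) else 0) = (if p1 then f m (False,False,p2,p3) (q0,q1,q2,q3) else 0)"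
        using "1"(1) True k mk by (auto simp del: sel_simp)
      have t1: "(if p3 then cnt (Y k n (sel (False,p1,p2,False)) (sel (q0,q1,q2,q3))) else 0) = (if p3 then f m (False,p1,p2,False) (q0,q1,q2,q3) else 0)"
        using "1"(2) True k mk by (auto simp del: sel_simp)
      have t2: "(if Suc k \<le> n \<and> q0 then cnt (Y k n (sel (False,p1,p2,p3)) (sel (False,q1,q2,q3))) else 0) = (if Suc k \<le> n \<and> q0 then f m (False,p1,p2,p3) (False,q1,q2,q3) else 0)"
        using "1"(3) True k mk by (auto simp del: sel_simp)
      have "cnt (Y k n (sel (p0,p1,p2,p3)) (sel (q0,q1,q2,q3))) =
        (if p1 then cnt (Y k n (sel (False,False,p2,p3)) (sel (q0,q1,q2,q3))) else 0) +
        (if p3 then cnt (Y k n (sel (False,p1,p2,False)) (sel (q0,q1,q2,q3))) else 0) +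
        (if Suc k \<le> n \<and> q0 then cnt (Y k n (sel (False,p1,p2,p3)) (sel (False,q1,q2,q3))) else 0)"
        using step[OF k(1), of 0 "(sel (p0,p1,p2,p3))" n "(sel (q0,q1,q2,q3))"] True by simp
      also have "\<dots> = f m (p0,p1,p2,p3) (q0,q1,q2,q3)"
        unfolding t0 t1 t2 feq using True mk by simp
      finally show ?thesis .
    next
      case F0: False
      show ?thesis
      proof (cases p1)
        case True
        have t0: "(if p2 then cnt (Y k n (sel (False,False,False,p3)) (sel (q0,q1,q2,q3))) else 0) = (if p2 then f m (False,False,False,p3) (q0,q1,q2,q3) else 0)"
          using "1"(4) True F0 k mk by (auto simp del: sel_simp)
        have t1: "(if Suc k \<le> n \<and> q1 then cnt (Y k n (sel (False,False,p2,p3)) (sel (q0,False,q2,q3))) else 0) = (if Suc k \<le> n \<and> q1 then f m (False,False,p2,p3) (q0,False,q2,q3) else 0)"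
          using "1"(5) True F0 k mk by (auto simp del: sel_simp)
        have "cnt (Y k n (sel (p0,p1,p2,p3)) (sel (q0,q1,q2,q3))) =
          (if p2 then cnt (Y k n (sel (False,False,False,p3)) (sel (q0,q1,q2,q3))) else 0) +
          (if Suc k \<le> n \<and> q1 then cnt (Y k n (sel (False,False,p2,p3)) (sel (q0,False,q2,q3))) else 0)"
          using step[OF k(1), of 1 "(sel (p0,p1,p2,p3))" n "(sel (q0,q1,q2,q3))"] True F0 by simp
        also have "\<dots> = f m (p0,p1,p2,p3) (q0,q1,q2,q3)"
          unfolding t0 t1 feq using True F0 mk by simp
        finally show ?thesis .
      next
        case F1: False
        show ?thesis
        proof (cases p2)
          case True
          have t0: "(if p3 then cnt (Y k n (sel (False,False,False,False)) (sel (q0,q1,q2,q3))) else 0) = (if p3 then f m (False,False,False,False) (q0,q1,q2,q3) else 0)"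
            using "1"(6) True F0 F1 k mk by (auto simp del: sel_simp)
          have t1: "(if Suc k \<le> n \<and> q2 then cnt (Y k n (sel (False,False,False,p3)) (sel (q0,q1,False,q3))) else 0) = (if Suc k \<le> n \<and> q2 then f m (False,False,False,p3) (q0,q1,False,q3) else 0)"
            using "1"(7) True F0 F1 k mk by (auto simp del: sel_simp)
          have "cnt (Y k n (sel (p0,p1,p2,p3)) (sel (q0,q1,q2,q3))) =
            (if p3 then cnt (Y k n (sel (False,False,False,False)) (sel (q0,q1,q2,q3))) else 0) +
            (if Suc k \<le> n \<and> q2 then cnt (Y k n (sel (False,False,False,p3)) (sel (q0,q1,False,q3))) else 0)"
            using step[OF k(1), of 2 "(sel (p0,p1,p2,p3))" n "(sel (q0,q1,q2,q3))"] True F0 F1 by simp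
          also have "\<dots> = f m (p0,p1,p2,p3) (q0,q1,q2,q3)"
            unfolding t0 t1 feq using True F0 F1 mk by simp
          finally show ?thesis .
        next
          case F2: False
          show ?thesis
          proof (cases p3)
            case True
            have t0: "(if Suc k \<le> n \<and> q3 then cnt (Y k n (sel (False,False,False,False)) (sel (q0,q1,q2,False))) else 0) = (if Suc k \<le> n \<and> q3 then f m (False,False,False,False) (q0,q1,q2,False) else 0)"
              using "1"(8) True F0 F1 F2 k mk by (auto simp del: sel_simp)
            have "cnt (Y k n (sel (p0,p1,p2,p3)) (sel (q0,q1,q2,q3))) =
              (if Suc k \<le> n \<and> q3 then cnt (Y k n (sel (False,False,False,False)) (sel (q0,q1,q2,False))) else 0)"
              using step[OF k(1), of 3 "(sel (p0,p1,p2,p3))" n "(sel (q0,q1,q2,q3))"] True F0 F1 F2 by simp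
            also have "\<dots> = f m (p0,p1,p2,p3) (q0,q1,q2,q3)"
              unfolding t0 feq using True F0 F1 F2 mk by simp
            finally show ?thesis .
          next
            case F3: False
            have e: "\<And>a. a < 4 \<Longrightarrow> \<not> sel (p0,p1,p2,p3) a" using F0 F1 F2 F3 by simp
            show ?thesis
            proof (cases m)
              case 0
              then have "k = n" using k by simp
              then have ye: "Y k n (sel (p0,p1,p2,p3)) (sel (q0,q1,q2,q3)) = {}"
                using Y_empty_top[where p="sel (p0,p1,p2,p3)" and n=n and q="sel (q0,q1,q2,q3)", OF e] by (simp only:)
              have "cnt (Y k n (sel (p0,p1,p2,p3)) (sel (q0,q1,q2,q3))) = 1"
                unfolding ye by (rule cnt_empty)
              then show ?thesis unfolding feq using 0 F0 F1 F2 F3 by simp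
            next
              case (Suc m')
              have ih: "cnt (Y (Suc k) n (sel (q0,q1,q2,q3)) (sel (True,True,True,True))) = f m' (q0,q1,q2,q3) (True,True,True,True)"
                using "1"(9)[OF F0 F1 F2 F3 Suc] k Suc by (simp del: sel_simp)
              have Yeq: "Y k n (sel (p0,p1,p2,p3)) (sel (q0,q1,q2,q3)) = Y (Suc k) n (sel (q0,q1,q2,q3)) (sel (True,True,True,True))"
                using Y_empty_shift[where p="sel (p0,p1,p2,p3)" and k=k and n=n and q="sel (q0,q1,q2,q3)", OF e] k Suc by (auto simp: Y_def)
              show ?thesis unfolding Yeq ih feq using F0 F1 F2 F3 Suc by simp
            qed
          qed
        qed
      qed
    qed
  qed
qed


fun uwe :: "nat \<Rightarrow> nat \<times> nat \<times> nat" where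
  "uwe 0 = (2,1,1)"
| "uwe (Suc m) = (case uwe m of (u,w,e) \<Rightarrow> (2*u+4*w+e, u+w, u))"

definition uu :: "nat \<Rightarrow> nat" where "uu m = fst (uwe m)"
definition ww :: "nat \<Rightarrow> nat" where "ww m = fst (snd (uwe m))"
definition ee :: "nat \<Rightarrow> nat" where "ee m = snd (snd (uwe m))"

lemma uwe_0[simp]: "uu 0 = 2" "ww 0 = 1" "ee 0 = 1"
  by (simp_all add: uu_def ww_def ee_def)

lemma uwe_Suc[simp]: "uu (Suc m) = 2 * uu m + 4 * ww m + ee m" "ww (Suc m) = uu m + ww m" "ee (Suc m) = uu m"
  by (simp_all add: uu_def ww_def ee_def split: prod.split)

definition h :: "nat \<Rightarrow> b4 \<Rightarrow> nat" where
  "h m X = (if X = (True,True,True,True) then uu m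
     else if X \<in> {(True,True,False,False),(False,True,True,False),(False,False,True,True),(True,False,False,True)} then ww m
     else if X = (False,False,False,False) then ee m else 0)"

lemma inv: "f m X (True,True,True,True) = h m X"
proof (induction m arbitrary: X)
  case 0
  obtain x0 x1 x2 x3 where X: "X = (x0,x1,x2,x3)" by (cases X) auto
  show ?case unfolding X
    by (cases x0; cases x1; cases x2; cases x3) (simp_all add: f.simps h_def)
next
  case (Suc m)
  obtain x0 x1 x2 x3 where X: "X = (x0,x1,x2,x3)" by (cases X) auto
  note fs = f.simps[of "Suc m"]
  have ih: "\<And>Z. f m Z (True,True,True,True) = h m Z" by (rule Suc.IH)
  show ?case unfolding X
    by (cases x0; cases x1; cases x2; cases x3) (simp_all add: fs ih h_def)
qed


lemma C4v: "(a::nat) < 4 \<Longrightarrow> a \<in> C4_verts"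
  unfolding C4_verts_def by auto

lemma CP_sub: "CP_edges n \<subseteq> Pow (CP_verts n)"
proof
  fix e assume "e \<in> CP_edges n"
  then show "e \<in> Pow (CP_verts n)"
    unfolding CP_edges_def cart_edges_def
  proof (elim UnE CollectE exE conjE)
    fix a a' b assume h: "e = {(a, b), (a', b)}" "{a, a'} \<in> C4_edges" "b \<in> P_verts n"
    from h(2) obtain i where i: "{a,a'} = {i, (i+1) mod 4}" "i < 4" unfolding C4_edges_def by blast
    have "a < 4" "a' < 4" using i by (auto simp: doubleton_eq_iff)
    then show ?thesis using h(1) h(3) C4v by (auto simp: CP_verts_def cart_verts_def)
  next
    fix a b b' assume h: "e = {(a, b), (a, b')}" "a \<in> C4_verts" "{b, b'} \<in> P_edges n"
    from h(3) obtain i where i: "{b,b'} = {i, i+1}" "1 \<le> i" "i < n" unfolding P_edges_def by blast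
    have "b \<in> P_verts n" "b' \<in> P_verts n" using i by (auto simp: doubleton_eq_iff P_verts_def)
    then show ?thesis using h(1) h(2) by (auto simp: CP_verts_def cart_verts_def)
  qed
qed

lemma CP_edges_eq:
  assumes V: "V \<subseteq> CP_verts n"
  shows "{e \<in> CP_edges n. e \<subseteq> V} = {e \<in> Eall. e \<subseteq> V}"
proof (rule set_eqI, rule iffI)
  fix e assume "e \<in> {e \<in> CP_edges n. e \<subseteq> V}"
  hence e: "e \<in> CP_edges n" "e \<subseteq> V" by auto
  from e(1) have "e \<in> Eall"
    unfolding CP_edges_def cart_edges_def
  proof (elim UnE CollectE exE conjE)
    fix a a' b assume h: "e = {(a, b), (a', b)}" "{a, a'} \<in> C4_edges" "b \<in> P_verts n"
    from h(2) obtain i where i: "{a,a'} = {i, (i+1) mod 4}" "i < 4" unfolding C4_edges_def by blast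
    have "e = {(i,b),((i+1) mod 4,b)}" using i(1) h(1) by (auto simp: doubleton_eq_iff)
    moreover have "1 \<le> b" using h(3) by (simp add: P_verts_def)
    ultimately show "e \<in> Eall" unfolding Eall_iff using i(2) by (intro disjI1 exI conjI) simp_all
  next
    fix a b b' assume h: "e = {(a, b), (a, b')}" "a \<in> C4_verts" "{b, b'} \<in> P_edges n"
    from h(3) obtain i where i: "{b,b'} = {i, i+1}" "1 \<le> i" unfolding P_edges_def by blast
    have "e = {(a,i),(a,Suc i)}" using i(1) h(1) by (auto simp: doubleton_eq_iff)
    moreover have "a < 4" using h(2) by (auto simp: C4_verts_def)
    ultimately show "e \<in> Eall" unfolding Eall_iff using i(2) by (intro disjI2 exI conjI) simp_all
  qed
  thus "e \<in> {e \<in> Eall. e \<subseteq> V}" using e by auto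
next
  fix e assume "e \<in> {e \<in> Eall. e \<subseteq> V}"
  hence e: "e \<in> Eall" "e \<subseteq> CP_verts n" "e \<subseteq> V" using V by auto
  from e(1) have "e \<in> CP_edges n" unfolding Eall_iff
  proof (elim disjE exE conjE)
    fix a j assume h: "e = {(a, j), ((a + 1) mod 4, j)}" "a < 4" "1 \<le> j"
    have "j \<le> n" using e(2) h(1) by (auto simp: CP_verts_def cart_verts_def P_verts_def)
    have "{a, (a+1) mod 4} \<in> C4_edges" unfolding C4_edges_def using h(2) by blast
    moreover have "j \<in> P_verts n" using h(3) \<open>j \<le> n\<close> by (simp add: P_verts_def)
    ultimately show ?thesis unfolding CP_edges_def cart_edges_def using h(1)
      by (intro UnI1 CollectI exI[of _ a] exI[of _ "(a+1) mod 4"] exI[of _ j] conjI) simp_all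
  next
    fix a j assume h: "e = {(a, j), (a, Suc j)}" "a < 4" "1 \<le> j"
    have "Suc j \<le> n" using e(2) h(1) by (auto simp: CP_verts_def cart_verts_def P_verts_def)
    have "{j, j+1} \<in> P_edges n" unfolding P_edges_def using h(3) \<open>Suc j \<le> n\<close> by auto
    moreover have "a \<in> C4_verts" using h(2) by (auto simp: C4_verts_def)
    ultimately show ?thesis unfolding CP_edges_def cart_edges_def using h(1)
      by (intro UnI2 CollectI exI[of _ a] exI[of _ j] exI[of _ "Suc j"] conjI) simp_all
  qed
  thus "e \<in> {e \<in> CP_edges n. e \<subseteq> V}" using e by auto
qed

lemma CPV_Y: "1 \<le> n \<Longrightarrow> CP_verts n = Y 1 n (sel (True,True,True,True)) (sel (True,True,True,True))"
  unfolding CP_verts_def cart_verts_def C4_verts_def P_verts_def Y_def by auto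

lemma gV_Y: "1 \<le> n \<Longrightarrow> CP_verts n - {(0,1),(1,1)} = Y 1 n (sel (False,False,True,True)) (sel (True,True,True,True))"
  unfolding CP_verts_def cart_verts_def C4_verts_def P_verts_def Y_def by auto

lemma G_uu: "1 \<le> n \<Longrightarrow> G n = uu (n - 1)"
proof -
  assume n: "1 \<le> n"
  have "CP_edges n = {e \<in> CP_edges n. e \<subseteq> CP_verts n}" using CP_sub by auto
  also have "\<dots> = {e \<in> Eall. e \<subseteq> CP_verts n}" by (rule CP_edges_eq) simp
  finally have "G n = cnt (CP_verts n)" unfolding G_def num_tilings_def cnt_def by simp
  also have "\<dots> = f (n - 1) (True,True,True,True) (True,True,True,True)"
    unfolding CPV_Y[OF n] using main n by blast
  also have "\<dots> = uu (n - 1)" by (simp add: inv h_def)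
  finally show ?thesis .
qed

lemma g_ww: "1 \<le> n \<Longrightarrow> g n = ww (n - 1)"
proof -
  assume n: "1 \<le> n"
  have "{e \<in> CP_edges n. e \<subseteq> CP_verts n - {(0,1),(1,1)}} = {e \<in> Eall. e \<subseteq> CP_verts n - {(0,1),(1,1)}}"
    by (rule CP_edges_eq) auto
  hence "g n = cnt (CP_verts n - {(0,1),(1,1)})" unfolding g_def num_tilings_def cnt_def Let_def by simp
  also have "\<dots> = f (n - 1) (False,False,True,True) (True,True,True,True)"
    unfolding gV_Y[OF n] using main n by blast
  also have "\<dots> = ww (n - 1)" by (simp add: inv h_def)
  finally show ?thesis .
qed

lemma A_0: "A 0 = 1" by (simp add: A_def)

lemma sq3: "sqrt 3 * sqrt 3 = (3::real)" by simp
lemma sq3': "sqrt 3 * (sqrt 3 * x) = (3::real) * x" by (simp add: mult.assoc[symmetric])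

lemma A_1: "A 1 = 3"
proof -
  have "(3 + sqrt 3) * (2 + sqrt 3) + (3 - sqrt 3) * (2 - sqrt 3) = (18::real)"
    by (simp add: algebra_simps sq3)
  thus ?thesis by (simp add: A_def)
qed

lemma pow_rec: "x^2 = 4*x - 1 \<Longrightarrow> (x::real)^(Suc (Suc n)) = 4 * x^(Suc n) - x^n"
proof -
  assume x: "x^2 = 4*x - 1"
  have "x^(Suc (Suc n)) = x^n * x^2" by (simp add: power2_eq_square algebra_simps)
  also have "\<dots> = 4 * x^(Suc n) - x^n" unfolding x by (simp add: algebra_simps)
  finally show ?thesis .
qed

lemma A_rec: "A (Suc (Suc n)) = 4 * A (Suc n) - A n"
proof -
  have r: "(2 + sqrt 3)^2 = 4*(2 + sqrt 3) - (1::real)" by (simp add: power2_eq_square algebra_simps)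
  have s: "(2 - sqrt 3)^2 = 4*(2 - sqrt 3) - (1::real)" by (simp add: power2_eq_square algebra_simps)
  have gen: "\<And>c d a b p q. (c*(4*a - b) + d*(4*p - q))/6 = 4*((c*a + d*p)/6) - (c*b+d*q)/(6::real)"
    by (simp add: field_simps)
  show ?thesis unfolding A_def pow_rec[OF r, of n] pow_rec[OF s, of n] by (rule gen)
qed

lemma A23: "A 2 = 11" "A 3 = 41"
proof -
  show "A 2 = 11" using A_rec[of 0] A_0 A_1 by (simp add: numeral_2_eq_2)
  then show "A 3 = 41" using A_rec[of 1] A_1 by (simp add: numeral_3_eq_3 numeral_2_eq_2)
qed

lemma uu_rec: "uu (Suc (Suc (Suc m))) + uu (Suc (Suc m)) + (uu (Suc m) + uu m) = 4 * (uu (Suc (Suc m)) + uu (Suc m))"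
  by simp

lemma ww_rec: "ww (Suc (Suc (Suc (Suc m)))) + 4 * ww (Suc m) = ww m + 4 * ww (Suc (Suc (Suc m)))"
  by simp

lemma uu_main: "A (Suc (Suc m)) = real (uu (Suc m) + uu m) \<and> A (Suc (Suc (Suc m))) = real (uu (Suc (Suc m)) + uu (Suc m))"
proof (induction m)
  case 0
  show ?case using A23 by (simp add: numeral_3_eq_3 numeral_2_eq_2)
next
  case (Suc m)
  have r: "real (uu (Suc (Suc (Suc m)))) + real (uu (Suc (Suc m))) + (real (uu (Suc m)) + real (uu m)) = 4 * (real (uu (Suc (Suc m))) + real (uu (Suc m)))"
    using arg_cong[OF uu_rec[of m], of real] by (simp only: of_nat_add of_nat_mult of_nat_numeral)
  have "A (Suc (Suc (Suc (Suc m)))) = 4 * A (Suc (Suc (Suc m))) - A (Suc (Suc m))" by (rule A_rec)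
  also have "\<dots> = real (uu (Suc (Suc (Suc m))) + uu (Suc (Suc m)))"
    using Suc.IH r by simp
  finally show ?case using Suc.IH by simp
qed

lemma ww_main: "A (Suc (Suc m)) = real (ww (Suc (Suc m))) - real (ww m) \<and> A (Suc (Suc (Suc m))) = real (ww (Suc (Suc (Suc m)))) - real (ww (Suc m))"
proof (induction m)
  case 0
  show ?case using A23 by (simp add: numeral_3_eq_3 numeral_2_eq_2)
next
  case (Suc m)
  have r: "real (ww (Suc (Suc (Suc (Suc m))))) + 4 * real (ww (Suc m)) = real (ww m) + 4 * real (ww (Suc (Suc (Suc m))))"
    using arg_cong[OF ww_rec[of m], of real] by (simp only: of_nat_add of_nat_mult of_nat_numeral)
  have "A (Suc (Suc (Suc (Suc m)))) = 4 * A (Suc (Suc (Suc m))) - A (Suc (Suc m))" by (rule A_rec)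
  also have "\<dots> = real (ww (Suc (Suc (Suc (Suc m))))) - real (ww (Suc (Suc m)))"
    using Suc.IH r by simp
  finally show ?case using Suc.IH by simp
qed

theorem mainTheorem3:
  fixes n :: nat
  assumes "n \<ge> 2"
  shows "A n = real (G n + G (n - 1)) \<and> A n = real (g (n + 1)) - real (g (n - 1))"
proof -
  obtain m where m: "n = Suc (Suc m)" using assms by (metis add_2_eq_Suc le_Suc_ex)
  have "G n = uu (Suc m)" "G (n - 1) = uu m" using G_uu m by auto
  moreover have "g (n+1) = ww (Suc (Suc m))" "g (n - 1) = ww m" using g_ww m by auto
  ultimately show ?thesis using uu_main[of m] ww_main[of m] m by simp
qed

end
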